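(* Consider the plant $\dot x=Ax+Bu+Ep(q)+E_ww$, $y=Cx+Du+F_ww$, $q=C_qx$, where $p$ is globally Lipschitz continuous and the disturbance satisfies $\|w\|_\infty\le\omega_0$ for an arbitrary given $\omega_0>0$. Suppose there exist $\alpha_0>0$, $\mu>0$, a symmetric $P>0$ in $\mathbb{R}^{2n_x\times2n_x}$ and matrices $K_1,K_2,L_1,L_2$ such that, for the continuous-time closed-loop system formed by the plant, the observer $\dot{\hat x}=A\hat x+Bu+Ep(\hat q+L_1(\hat y-y))+L_2(\hat y-y)$, $\hat y=C\hat x+Du$, $\hat q=C_q\hat x$, and the controller $u=K_1\hat x+K_2p(C_q\hat x)$, the function $V(z)=z^\top Pz$ with $z=(x^\top,(x-\hat x)^\top)^\top$ satisfies $\dot V\le-\alpha_0V+\mu\|w\|^2$ along its trajectories. Now consider the event-triggered implementation: the same observer (driven by the actually applied input $u$), triggering times $t_0=0<t_1<t_2<\cdots$, $\hat x_s(t)=\hat x(t_k)$ for $t\in[t_k,t_{k+1})$, input $u(t)=K_1\hat x_s(t)+K_2p(C_q\hat x_s(t))$, and the triggering rule $t_{k+1}=\inf\{t\mid t\ge t_k+\tau,\ \|\hat x_s(t)-\hat x(t)\|>\sigma\|\hat x(t)\|+\epsilon\}$. Then positive numbers $\tau,\sigma,\epsilon$ can be chosen such that this event-triggered closed-loop system is input-to-state practically stable (ISpS) with respect to $w$.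
   Context: Plant: $x\in\mathbb{R}^{n_x}$ state, $u\in\mathbb{R}^{n_u}$ input, $y\in\mathbb{R}^{n_y}$ output, $w\in\mathbb{R}^{n_w}$ unknown measurable disturbance; $A,B,C,D,C_q,E,E_w,F_w$ constant real matrices of compatible sizes; $p:\mathbb{R}^{n_q}\to\mathbb{R}^{n_p}$ known with $p(0)=0$. The closed loop is ISpS w.r.t. $w$ if there exist $\beta_1\in\mathcal{KL}$, $\beta_2\in\mathcal K$ and a constant $d\ge0$ such that for every initial condition $(x(0),\hat x(0))$ and every admissible disturbance $w$, $\|z(t)\|\le\beta_1(\|z(0)\|,t)+\beta_2(\|w\|_\infty)+d$ for all $t\ge0$, where $z=(x^\top,(x-\hat x)^\top)^\top$ and $\|w\|_\infty=\sup_{t\ge0}\|w(t)\|$. *)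

theory Defs
  imports "HOL-Analysis.Analysis"
begin

text \<open>Stacked vector z = (a, b) in R^(2n), indexed by the sum type 'n + 'n.\<close>
definition stack :: "real^'n \<Rightarrow> real^'n \<Rightarrow> real^('n + 'n)" where
  "stack a b = (\<chi> i. case i of Inl j \<Rightarrow> a $ j | Inr j \<Rightarrow> b $ j)"

text \<open>Plant: xdot = A x + B u + E p(Cq x) + Ew w.\<close>
definition plant_dx ::
  "real^'nx^'nx \<Rightarrow> real^'nu^'nx \<Rightarrow> real^'np^'nx \<Rightarrow> real^'nw^'nx \<Rightarrow> real^'nx^'nq
   \<Rightarrow> (real^'nq \<Rightarrow> real^'np) \<Rightarrow> real^'nx \<Rightarrow> real^'nu \<Rightarrow> real^'nw \<Rightarrow> real^'nx" where
  "plant_dx A B E Ew Cq p x u w = A *v x + B *v u + E *v p (Cq *v x) + Ew *v w"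

text \<open>Plant output: y = C x + D u + Fw w.\<close>
definition plant_y ::
  "real^'nx^'ny \<Rightarrow> real^'nu^'ny \<Rightarrow> real^'nw^'ny \<Rightarrow> real^'nx \<Rightarrow> real^'nu \<Rightarrow> real^'nw \<Rightarrow> real^'ny" where
  "plant_y C D Fw x u w = C *v x + D *v u + Fw *v w"

text \<open>Observer: xhdot = A xh + B u + E p(qh + L1 (yh - y)) + L2 (yh - y), yh = C xh + D u, qh = Cq xh.\<close>
definition obs_dxh ::
  "real^'nx^'nx \<Rightarrow> real^'nu^'nx \<Rightarrow> real^'nx^'ny \<Rightarrow> real^'nu^'ny \<Rightarrow> real^'np^'nx \<Rightarrow> real^'nx^'nq
   \<Rightarrow> real^'ny^'nq \<Rightarrow> real^'ny^'nx \<Rightarrow> (real^'nq \<Rightarrow> real^'np)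
   \<Rightarrow> real^'nx \<Rightarrow> real^'nu \<Rightarrow> real^'ny \<Rightarrow> real^'nx" where
  "obs_dxh A B C D E Cq L1 L2 p xh u y =
     (let yh = C *v xh + D *v u; qh = Cq *v xh
      in A *v xh + B *v u + E *v p (qh + L1 *v (yh - y)) + L2 *v (yh - y))"

text \<open>Controller: u = K1 xh + K2 p(Cq xh).\<close>
definition ctrl ::
  "real^'nx^'nu \<Rightarrow> real^'np^'nu \<Rightarrow> real^'nx^'nq \<Rightarrow> (real^'nq \<Rightarrow> real^'np) \<Rightarrow> real^'nx \<Rightarrow> real^'nu" where
  "ctrl K1 K2 Cq p xh = K1 *v xh + K2 *v p (Cq *v xh)"

text \<open>Dissipation inequality Vdot <= -alpha0 V + mu |w|^2 for V(z) = z' P z along the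
  continuous-time closed loop (plant + observer + controller u = K1 xh + K2 p(Cq xh)),
  stated pointwise for all states and all admissible disturbance values |w| <= omega0.\<close>
definition cl_lyap where
  "cl_lyap A B C D E Ew Fw Cq p K1 K2 L1 L2 (P :: real^('nx + 'nx)^('nx + 'nx)) \<alpha>0 \<mu> \<omega>0 \<longleftrightarrow>
    (\<forall>(x :: real^'nx) (xh :: real^'nx) w. norm w \<le> \<omega>0 \<longrightarrow>
      (let u = ctrl K1 K2 Cq p xh;
           dx = plant_dx A B E Ew Cq p x u w;
           dxh = obs_dxh A B C D E Cq L1 L2 p xh u (plant_y C D Fw x u w);
           z = stack x (x - xh);
           dz = stack dx (dx - dxh)
       in dz \<bullet> (P *v z) + z \<bullet> (P *v dz) \<le> - \<alpha>0 * (z \<bullet> (P *v z)) + \<mu> * (norm w)\<^sup>2))"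

text \<open>Comparison functions.\<close>
definition class_K :: "(real \<Rightarrow> real) \<Rightarrow> bool" where
  "class_K \<gamma> \<longleftrightarrow> continuous_on {0..} \<gamma> \<and> strict_mono_on {0..} \<gamma> \<and> \<gamma> 0 = 0"

definition class_KL :: "(real \<Rightarrow> real \<Rightarrow> real) \<Rightarrow> bool" where
  "class_KL \<beta> \<longleftrightarrow>
     (\<forall>t\<ge>0. class_K (\<lambda>s. \<beta> s t)) \<and>
     (\<forall>s\<ge>0. (\<forall>t1 t2. 0 \<le> t1 \<longrightarrow> t1 \<le> t2 \<longrightarrow> \<beta> s t2 \<le> \<beta> s t1) \<and>
              ((\<lambda>t. \<beta> s t) \<longlongrightarrow> 0) at_top)"

text \<open>Admissible disturbance: Lebesgue measurable on [0,oo) with |w(t)| <= omega0 for t >= 0.\<close>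
definition admissible_dist :: "real \<Rightarrow> (real \<Rightarrow> real^'nw) \<Rightarrow> bool" where
  "admissible_dist \<omega>0 w \<longleftrightarrow> w \<in> borel_measurable (lebesgue_on {0..}) \<and> (\<forall>t\<ge>0. norm (w t) \<le> \<omega>0)"

definition sup_norm :: "(real \<Rightarrow> real^'nw) \<Rightarrow> real" where
  "sup_norm w = (SUP t\<in>{0..}. norm (w t))"

text \<open>Solutions (Caratheodory, integral form, on [0,oo)) of the event-triggered closed loop.
  tk are the triggering times (extended reals; \<infinity> means no further event), xs is the held
  observer state, the input is u = K1 xs + K2 p(Cq xs), and the observer is driven by this u.
  Triggering rule: t_{k+1} = inf {t | t >= t_k + tau, |xh(t_k) - xh(t)| > sigma |xh(t)| + eps},
  where xh(t_k) is the value of xs held since t_k.\<close>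
definition et_solution where
  "et_solution A B C D E Ew Fw Cq p K1 K2 L1 L2 \<tau> \<sigma> \<epsilon> w
      (x :: real \<Rightarrow> real^'nx) (xh :: real \<Rightarrow> real^'nx) (xs :: real \<Rightarrow> real^'nx) (tk :: nat \<Rightarrow> ereal) \<longleftrightarrow>
    tk 0 = 0 \<and>
    (\<forall>k. tk k < \<infinity> \<longrightarrow>
       tk (Suc k) = Inf (ereal ` {t. tk k + ereal \<tau> \<le> ereal t \<and>
                          norm (xh (real_of_ereal (tk k)) - xh t) > \<sigma> * norm (xh t) + \<epsilon>})) \<and>
    (\<forall>k. tk k = \<infinity> \<longrightarrow> tk (Suc k) = \<infinity>) \<and>
    (\<forall>k t. tk k \<le> ereal t \<and> ereal t < tk (Suc k) \<longrightarrow> xs t = xh (real_of_ereal (tk k))) \<and>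
    (\<forall>t\<ge>0. ((\<lambda>s. plant_dx A B E Ew Cq p (x s) (ctrl K1 K2 Cq p (xs s)) (w s))
               has_integral (x t - x 0)) {0..t}) \<and>
    (\<forall>t\<ge>0. ((\<lambda>s. obs_dxh A B C D E Cq L1 L2 p (xh s) (ctrl K1 K2 Cq p (xs s))
                   (plant_y C D Fw (x s) (ctrl K1 K2 Cq p (xs s)) (w s)))
               has_integral (xh t - xh 0)) {0..t})"

text \<open>ISpS of the event-triggered closed loop w.r.t. w, with z = (x, x - xh).\<close>
definition ISpS_et where
  "ISpS_et A B C D E Ew Fw Cq p K1 K2 L1 L2 \<tau> \<sigma> \<epsilon> \<omega>0 \<longleftrightarrow>
    (\<exists>\<beta>1 \<beta>2 d. class_KL \<beta>1 \<and> class_K \<beta>2 \<and> d \<ge> 0 \<and>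
      (\<forall>w (x :: real \<Rightarrow> real^'nx) xh xs tk.
         admissible_dist \<omega>0 w \<and>
         et_solution A B C D E Ew Fw Cq p K1 K2 L1 L2 \<tau> \<sigma> \<epsilon> w x xh xs tk \<longrightarrow>
         (\<forall>t\<ge>0. norm (stack (x t) (x t - xh t))
                  \<le> \<beta>1 (norm (stack (x 0) (x 0 - xh 0))) t + \<beta>2 (sup_norm w) + d)))"

end

theory Submission
  imports Defs
begin



lemma stack_inner: "stack a b \<bullet> stack c d = a \<bullet> c + b \<bullet> d"
proof -
  have "stack a b \<bullet> stack c d = (\<Sum>i\<in>(UNIV <+> UNIV). stack a b $ i * stack c d $ i)"
    by (simp add: inner_vec_def UNIV_Plus_UNIV)
  also have "\<dots> = (\<Sum>i\<in>UNIV. a $ i * c $ i) + (\<Sum>i\<in>UNIV. b $ i * d $ i)"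
    by (subst sum.Plus) (auto simp: stack_def o_def)
  finally show ?thesis by (simp add: inner_vec_def)
qed

lemma norm_stack_sq: "(norm (stack a b))\<^sup>2 = (norm a)\<^sup>2 + (norm b)\<^sup>2"
  by (simp add: power2_norm_eq_inner stack_inner)

lemma norm_stack_ge1: "norm a \<le> norm (stack a b)"
proof (rule power2_le_imp_le)
  show "(norm a)\<^sup>2 \<le> (norm (stack a b))\<^sup>2"
    using norm_stack_sq[of a b] zero_le_power2[of "norm b"] by linarith
qed simp

lemma norm_stack_ge2: "norm b \<le> norm (stack a b)"
proof (rule power2_le_imp_le)
  show "(norm b)\<^sup>2 \<le> (norm (stack a b))\<^sup>2"
    using norm_stack_sq[of a b] zero_le_power2[of "norm a"] by linarith
qed simp

lemma norm_stack_le: "norm (stack a b) \<le> norm a + norm b"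
proof -
  have "(norm (stack a b))\<^sup>2 \<le> (norm a + norm b)\<^sup>2"
    unfolding norm_stack_sq power2_sum using mult_nonneg_nonneg[of "norm a" "norm b"] by simp
  then show ?thesis by (rule power2_le_imp_le) simp
qed

lemma stack_add: "stack (a + c) (b + d) = stack a b + stack c d"
  by (simp add: stack_def vec_eq_iff split: sum.splits)

lemma stack_diff: "stack (a - c) (b - d) = stack a b - stack c d"
  by (simp add: stack_def vec_eq_iff split: sum.splits)

lemma stack_scaleR: "stack (r *\<^sub>R a) (r *\<^sub>R b) = r *\<^sub>R stack a b"
  by (simp add: stack_def vec_eq_iff split: sum.splits)

lemma stack_zero: "stack 0 0 = 0"
  by (simp add: stack_def vec_eq_iff split: sum.splits)

lemma mat_bound: fixes M :: "real^'n^'m" obtains K :: real where "K \<ge> 1" "\<And>v. norm (M *v v) \<le> K * norm v"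
proof -
  obtain K where K: "K > 0" "\<And>v. norm (M *v v) \<le> norm v * K"
    using bounded_linear.pos_bounded[OF matrix_vector_mul_bounded_linear[of M]] by blast
  show ?thesis
  proof (rule that[of "max 1 K"])
    fix v
    have "norm (M *v v) \<le> norm v * K" by (rule K)
    also have "\<dots> \<le> max 1 K * norm v"
      using mult_left_mono[OF max.cobounded2[of K 1] norm_ge_zero[of v]] by (simp add: mult.commute)
    finally show "norm (M *v v) \<le> max 1 K * norm v" .
  qed simp
qed

lemma quad_upper:
  assumes "\<And>v. norm (P *v v) \<le> K * norm v"
  shows "\<bar>a \<bullet> (P *v b)\<bar> \<le> K * norm a * norm b"
proof -
  have "\<bar>a \<bullet> (P *v b)\<bar> \<le> norm a * norm (P *v b)" by (rule Cauchy_Schwarz_ineq2)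
  also have "\<dots> \<le> norm a * (K * norm b)" by (simp add: assms mult_left_mono)
  finally show ?thesis by (simp add: algebra_simps)
qed

lemma quad_lower:
  fixes P :: "real^'m^'m"
  assumes "\<forall>z. z \<noteq> 0 \<longrightarrow> z \<bullet> (P *v z) > 0"
  obtains c where "c > 0" "\<And>z. c * (norm z)\<^sup>2 \<le> z \<bullet> (P *v z)"
proof -
  have cont: "continuous_on (sphere 0 1) (\<lambda>z::real^'m. z \<bullet> (P *v z))"
    by (intro continuous_on_inner continuous_on_id bounded_linear.continuous_on[OF matrix_vector_mul_bounded_linear])
  obtain u :: "real^'m" where u: "norm u = 1" using vector_choose_size[of 1] by auto
  have ne: "sphere (0::real^'m) 1 \<noteq> {}" using u by auto
  obtain z0 where z0: "z0 \<in> sphere 0 1" "\<And>z. z \<in> sphere 0 1 \<Longrightarrow> z0 \<bullet> (P *v z0) \<le> z \<bullet> (P *v z)"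
    using continuous_attains_inf[OF compact_sphere ne cont] by blast
  define c where "c = z0 \<bullet> (P *v z0)"
  have "z0 \<noteq> 0" using z0 by auto
  then have cpos: "c > 0" using assms c_def by auto
  show ?thesis
  proof (rule that[OF cpos])
    fix z :: "real^'m"
    show "c * (norm z)\<^sup>2 \<le> z \<bullet> (P *v z)"
    proof (cases "z = 0")
      case True then show ?thesis by simp
    next
      case False
      define v where "v = (1 / norm z) *\<^sub>R z"
      have "v \<in> sphere 0 1" using False by (simp add: v_def)
      then have "c \<le> v \<bullet> (P *v v)" using z0 c_def by auto
      also have "v \<bullet> (P *v v) = (1 / norm z)^2 * (z \<bullet> (P *v z))"
        by (simp add: v_def matrix_vector_mult_scaleR power2_eq_square)
      finally have "c \<le> (1 / norm z)^2 * (z \<bullet> (P *v z))" .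
      then have "c * (norm z)\<^sup>2 \<le> (1 / norm z)^2 * (z \<bullet> (P *v z)) * (norm z)\<^sup>2"
        by (simp add: mult_right_mono)
      also have "\<dots> = z \<bullet> (P *v z)" using False by (simp add: power2_eq_square field_simps)
      finally show ?thesis .
    qed
  qed
qed


lemma quad_step_G:
  fixes G :: "real \<Rightarrow> real"
  assumes st: "s \<le> t" and C0: "C \<ge> 0"
    and step: "\<And>a b. s \<le> a \<Longrightarrow> a \<le> b \<Longrightarrow> b \<le> t \<Longrightarrow> G b - G a \<le> C * (b - a)\<^sup>2"
  shows "G t \<le> G s"
proof (rule ccontr)
  assume "\<not> G t \<le> G s"
  then have dpos: "G t - G s > 0" by simp
  obtain n :: nat where n: "real n > C * (t - s)\<^sup>2 / (G t - G s)" using reals_Archimedean2 by blast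
  have npos: "n > 0"
  proof -
    have "C * (t - s)\<^sup>2 / (G t - G s) \<ge> 0" using C0 dpos by simp
    then show ?thesis using n by (cases n) auto
  qed
  define d where "d = (t - s) / real n"
  have d0: "d \<ge> 0" using st npos by (simp add: d_def)
  have ind: "i \<le> n \<Longrightarrow> G (s + real i * d) - G s \<le> real i * C * d\<^sup>2" for i
  proof (induction i)
    case 0 then show ?case by simp
  next
    case (Suc i)
    have le: "s + real (Suc i) * d \<le> t"
    proof -
      have "real (Suc i) * d \<le> real n * d" using Suc.prems d0 by (intro mult_right_mono) auto
      also have "real n * d = t - s" using npos by (simp add: d_def)
      finally show ?thesis by simp
    qed
    have "G (s + real (Suc i) * d) - G (s + real i * d) \<le> C * ((s + real (Suc i) * d) - (s + real i * d))\<^sup>2"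
      using d0 le by (intro step) (auto simp: algebra_simps)
    also have "(s + real (Suc i) * d) - (s + real i * d) = d" by (simp add: algebra_simps)
    finally have "G (s + real (Suc i) * d) - G (s + real i * d) \<le> C * d\<^sup>2" .
    with Suc show ?case by (simp add: algebra_simps)
  qed
  from ind[of n] have "G (s + real n * d) - G s \<le> real n * C * d\<^sup>2" by simp
  moreover have "s + real n * d = t" using npos by (simp add: d_def)
  moreover have "real n * C * d\<^sup>2 = C * (t - s)\<^sup>2 / real n"
    using npos by (simp add: d_def power2_eq_square field_simps)
  ultimately have "G t - G s \<le> C * (t - s)\<^sup>2 / real n" by simp
  then have "(G t - G s) * real n \<le> C * (t - s)\<^sup>2" using npos by (simp add: field_simps)
  moreover have "C * (t - s)\<^sup>2 < real n * (G t - G s)" using n dpos by (simp add: field_simps)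
  ultimately show False by (simp add: mult.commute)
qed

lemma quad_integral_ineq:
  fixes z dz :: "real \<Rightarrow> real^'m" and P :: "real^'m^'m"
  assumes st: "s \<le> t"
    and int: "\<And>a b. s \<le> a \<Longrightarrow> a \<le> b \<Longrightarrow> b \<le> t \<Longrightarrow> (dz has_integral (z b - z a)) {a..b}"
    and bnd: "\<And>r. r \<in> {s..t} \<Longrightarrow> norm (dz r) \<le> M"
    and K0: "K \<ge> 0"
    and KP: "\<And>v. norm (P *v v) \<le> K * norm v"
    and lyap: "\<And>r. r \<in> {s..t} \<Longrightarrow> dz r \<bullet> (P *v z r) + z r \<bullet> (P *v dz r) \<le> h r"
    and hcont: "continuous_on {s..t} h"
  shows "z t \<bullet> (P *v z t) - z s \<bullet> (P *v z s) \<le> integral {s..t} h"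
proof -
  have M0: "M \<ge> 0" using bnd[of s] st by (meson atLeastAtMost_iff norm_ge_zero order.trans order_refl)
  define G where "G u = z u \<bullet> (P *v z u) - integral {s..u} h" for u
  have hint: "h integrable_on {a..b}" if "s \<le> a" "b \<le> t" for a b
    using integrable_continuous_real[OF continuous_on_subset[OF hcont]] that by auto
  have step: "G b - G a \<le> (3 * K * M\<^sup>2) * (b - a)\<^sup>2" if ab: "s \<le> a" "a \<le> b" "b \<le> t" for a b
  proof -
    define \<Delta> where "\<Delta> = z b - z a"
    have dist: "norm (z r - z a) \<le> M * (b - a)" if "r \<in> {a..b}" for r
    proof -
      have "(dz has_integral (z r - z a)) {a..r}" using int[of a r] that ab by auto
      then have "norm (z r - z a) \<le> M * Henstock_Kurzweil_Integration.content {a..r}"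
        by (intro has_integral_bound_real[where f=dz and S="{}", OF M0]) (use bnd that ab in auto)
      also have "\<dots> = M * (r - a)" using that by simp
      also have "\<dots> \<le> M * (b - a)" using that M0 by (intro mult_left_mono) auto
      finally show ?thesis .
    qed
    have nD: "norm \<Delta> \<le> M * (b - a)" using dist[of b] ab by (simp add: \<Delta>_def)
    have expand: "z b \<bullet> (P *v z b) - z a \<bullet> (P *v z a) = (\<Delta> \<bullet> (P *v z a) + z a \<bullet> (P *v \<Delta>)) + \<Delta> \<bullet> (P *v \<Delta>)"
    proof -
      have "z b = z a + \<Delta>" by (simp add: \<Delta>_def)
      then show ?thesis by (simp add: matrix_vector_right_distrib inner_add_left inner_add_right algebra_simps)
    qed
    define L where "L y = y \<bullet> (P *v z a) + z a \<bullet> (P *v y)" for y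
    have bl: "bounded_linear L"
      unfolding L_def
      by (intro bounded_linear_add bounded_linear_inner_left bounded_linear_compose[OF bounded_linear_inner_right matrix_vector_mul_bounded_linear])
    have phi_int: "((\<lambda>r. L (dz r)) has_integral L \<Delta>) {a..b}"
      using has_integral_linear[OF int[OF ab] bl] by (simp add: o_def \<Delta>_def)
    have phi_le: "L (dz r) \<le> h r + 2 * K * M * M * (b - a)" if r: "r \<in> {a..b}" for r
    proof -
      have rr: "r \<in> {s..t}" using r ab by auto
      have eq: "L (dz r) = (dz r \<bullet> (P *v z r) + z r \<bullet> (P *v dz r)) + (dz r \<bullet> (P *v (z a - z r)) + (z a - z r) \<bullet> (P *v dz r))"
        by (simp add: L_def matrix_vector_right_distrib inner_diff_left inner_diff_right matrix_vector_mult_diff_distrib algebra_simps)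
      have b1: "\<bar>dz r \<bullet> (P *v (z a - z r))\<bar> \<le> K * M * (M * (b - a))"
      proof -
        have "\<bar>dz r \<bullet> (P *v (z a - z r))\<bar> \<le> K * norm (dz r) * norm (z a - z r)" by (rule quad_upper[OF KP])
        also have "\<dots> \<le> K * M * (M * (b - a))"
          using bnd[OF rr] dist[OF r] K0 M0 by (intro mult_mono) (auto simp: norm_minus_commute)
        finally show ?thesis .
      qed
      have b2: "\<bar>(z a - z r) \<bullet> (P *v dz r)\<bar> \<le> K * M * (M * (b - a))"
      proof -
        have "\<bar>(z a - z r) \<bullet> (P *v dz r)\<bar> \<le> K * norm (z a - z r) * norm (dz r)" by (rule quad_upper[OF KP])
        also have "\<dots> = K * norm (dz r) * norm (z a - z r)" by simp
        also have "\<dots> \<le> K * M * (M * (b - a))"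
          using bnd[OF rr] dist[OF r] K0 M0 by (intro mult_mono) (auto simp: norm_minus_commute)
        finally show ?thesis .
      qed
      show ?thesis using eq lyap[OF rr] b1 b2 by (simp add: abs_le_iff) 
    qed
    have h_int: "((\<lambda>r. h r + 2 * K * M * M * (b - a)) has_integral (integral {a..b} h + 2 * K * M * M * (b - a) * (b - a))) {a..b}"
    proof -
      have "(h has_integral integral {a..b} h) {a..b}" using hint ab by auto
      moreover have "((\<lambda>r. 2 * K * M * M * (b - a)) has_integral (2 * K * M * M * (b - a)) * (b - a)) {a..b}"
        using has_integral_const_real[of "2 * K * M * M * (b - a)" a b] ab by (simp add: mult.commute)
      ultimately show ?thesis by (intro has_integral_add) auto
    qed
    have I1: "L \<Delta> \<le> integral {a..b} h + 2 * K * M * M * (b - a) * (b - a)"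
      by (rule has_integral_le[OF phi_int h_int phi_le])
    have I2: "\<Delta> \<bullet> (P *v \<Delta>) \<le> K * M * M * (b - a) * (b - a)"
    proof -
      have "\<Delta> \<bullet> (P *v \<Delta>) \<le> K * norm \<Delta> * norm \<Delta>" using quad_upper[OF KP, of \<Delta> \<Delta>] by simp
      also have "\<dots> \<le> K * (M * (b - a)) * (M * (b - a))"
        using nD K0 M0 ab by (intro mult_mono mult_nonneg_nonneg) auto
      finally show ?thesis by (simp add: algebra_simps)
    qed
    have comb: "integral {s..b} h = integral {s..a} h + integral {a..b} h"
      using Henstock_Kurzweil_Integration.integral_combine[OF ab(1) ab(2) hint[OF order_refl ab(3)]] by simp
    show ?thesis
      using expand I1 I2 comb unfolding G_def L_def by (simp add: power2_eq_square algebra_simps)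
  qed
  have "G t \<le> G s" by (rule quad_step_G[OF st _ step]) (use K0 M0 in auto)
  then show ?thesis by (simp add: G_def)
qed




lemma comparison:
  fixes V :: "real \<Rightarrow> real"
  assumes a0: "a > 0" and c0: "c \<ge> 0"
    and Vc: "\<And>T. continuous_on {0..T} V"
    and ineq: "\<And>s t. 0 \<le> s \<Longrightarrow> s \<le> t \<Longrightarrow> V t - V s \<le> integral {s..t} (\<lambda>r. - a * V r + c)"
    and t0: "t \<ge> 0"
  shows "V t \<le> exp (- a * t) * V 0 + c / a"
proof -
  define y where "y r = exp (- a * r) * (V 0 - c / a) + c / a" for r
  define D where "D r = V r - y r" for r
  have yder: "(y has_vector_derivative (- a * y r + c)) (at r within X)" for r X
  proof -
    have "(y has_real_derivative (exp (- a * r) * (- a) * (V 0 - c / a))) (at r within X)"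
      unfolding y_def by (auto intro!: derivative_eq_intros)
    moreover have "exp (- a * r) * (- a) * (V 0 - c / a) = - a * y r + c"
      using a0 by (simp add: y_def field_simps)
    ultimately show ?thesis by (simp add: has_real_derivative_iff_has_vector_derivative)
  qed
  have ycont: "continuous_on X y" for X unfolding y_def by (intro continuous_intros)
  have Dc: "continuous_on {0..T} D" for T unfolding D_def by (intro continuous_on_diff Vc ycont)
  have Dineq: "D t - D s \<le> - a * integral {s..t} D" if st: "0 \<le> s" "s \<le> t" for s t
  proof -
    have yint: "((\<lambda>r. - a * y r + c) has_integral (y t - y s)) {s..t}"
      by (rule fundamental_theorem_of_calculus[OF st(2)]) (rule yder)
    have Vint: "(\<lambda>r. - a * V r + c) integrable_on {s..t}"
      by (rule integrable_continuous_real, intro continuous_intros continuous_on_subset[OF Vc[of t]]) (use st in auto)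
    have Dint: "D integrable_on {s..t}"
      by (rule integrable_continuous_real, rule continuous_on_subset[OF Dc[of t]]) (use st in auto)
    have "integral {s..t} (\<lambda>r. - a * V r + c) - (y t - y s) = integral {s..t} (\<lambda>r. (- a * V r + c) - (- a * y r + c))"
      using integral_diff[OF Vint has_integral_integrable[OF yint]] integral_unique[OF yint] by simp
    also have "\<dots> = integral {s..t} (\<lambda>r. - a * D r)" by (simp add: D_def algebra_simps)
    also have "\<dots> = - a * integral {s..t} D" by (simp add: integral_mult_right)
    finally show ?thesis using ineq[OF st] by (simp add: D_def)
  qed
  have D0: "D 0 = 0" by (simp add: D_def y_def)
  have Dle: "D t \<le> 0"
  proof (rule ccontr)
    assume "\<not> D t \<le> 0"
    then have Dt: "D t > 0" by simp
    define S where "S = {r \<in> {0..t}. D r \<le> 0}"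
    have "closed S" unfolding S_def
      by (rule continuous_on_closed_Collect_le[OF Dc continuous_on_const]) simp
    have "compact ({0..t} \<inter> S)" by (rule compact_Int_closed[OF compact_Icc \<open>closed S\<close>])
    moreover have "{0..t} \<inter> S = S" by (auto simp: S_def)
    ultimately have cS: "compact S" by simp
    have ne: "S \<noteq> {}" using D0 t0 by (auto simp: S_def)
    obtain t1 where t1: "t1 \<in> S" "\<And>r. r \<in> S \<Longrightarrow> r \<le> t1"
      using continuous_attains_sup[OF cS ne continuous_on_id] by auto
    have t1t: "0 \<le> t1" "t1 \<le> t" "D t1 \<le> 0" using t1 by (auto simp: S_def)
    have ct1: "continuous_on {t1..t} D"
      by (rule continuous_on_subset[OF Dc[of t]]) (use t1t in auto)
    have "\<exists>x\<ge>t1. x \<le> t \<and> D x = 0"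
      by (rule IVT'[of D t1 0 t, OF t1t(3) _ t1t(2) ct1]) (use Dt in simp)
    then obtain x where x: "t1 \<le> x" "x \<le> t" "D x = 0" by blast
    have "x \<in> S" using x t1t by (simp add: S_def)
    then have "x = t1" using t1(2)[of x] x(1) by simp
    then have Dt1: "D t1 = 0" using x by simp
    have nn: "D r \<ge> 0" if "r \<in> {t1..t}" for r
    proof (rule ccontr)
      assume "\<not> D r \<ge> 0"
      then have "r \<in> S" using that t1t by (simp add: S_def)
      then have "r = t1" using t1(2)[of r] that by simp
      then show False using Dt1 \<open>\<not> D r \<ge> 0\<close> by simp
    qed
    have Dint: "D integrable_on {t1..t}"
      by (rule integrable_continuous_real, rule continuous_on_subset[OF Dc[of t]]) (use t1t in auto)
    have "integral {t1..t} D \<ge> 0" by (rule integral_nonneg[OF Dint]) (use nn in auto)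
    then have "D t - D t1 \<le> 0" using Dineq[OF t1t(1) t1t(2)] a0
      using mult_nonneg_nonneg[of a "integral {t1..t} D"] by linarith
    then show False using Dt Dt1 by simp
  qed
  have "exp (- a * t) * (- c / a) \<le> 0" using a0 c0 by (simp add: mult_nonneg_nonneg divide_nonneg_pos)
  then show ?thesis using Dle by (simp add: D_def y_def algebra_simps)
qed




lemma norm4: "norm (a + b + c + d) \<le> norm a + norm b + norm c + norm (d::'a::real_normed_vector)"
proof -
  have "norm (a + b + c + d) \<le> norm (a + b + c) + norm d" by (rule norm_triangle_ineq)
  also have "norm (a + b + c) \<le> norm (a + b) + norm c" by (rule norm_triangle_ineq)
  also have "norm (a + b) \<le> norm a + norm b" by (rule norm_triangle_ineq)
  finally show ?thesis by simp
qed

lemma N_pows: assumes "(N::real) \<ge> 1"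
  shows "N \<le> N*N*N*N" "N*N \<le> N*N*N*N" "N*N*N \<le> N*N*N*N" "N \<le> N*N*N" "0 \<le> N" "N \<le> N*N"
proof -
  have a: "N \<le> N*N" using assms mult_left_mono[of 1 N N] by simp
  have b: "N*N \<le> N*N*N" using assms mult_left_mono[of 1 N "N*N"] by simp
  have c: "N*N*N \<le> N*N*N*N" using assms mult_left_mono[of 1 N "N*N*N"] by simp
  show "N \<le> N*N*N*N" "N*N \<le> N*N*N*N" "N*N*N \<le> N*N*N*N" "N \<le> N*N*N" "0 \<le> N" "N \<le> N*N"
    using a b c assms by linarith+
qed

locale bnds =
  fixes A :: "real^'nx^'nx" and B :: "real^'nu^'nx" and C :: "real^'nx^'ny"
    and D :: "real^'nu^'ny" and E :: "real^'np^'nx" and Ew :: "real^'nw^'nx"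
    and Fw :: "real^'nw^'ny" and Cq :: "real^'nx^'nq" and p :: "real^'nq \<Rightarrow> real^'np"
    and K1 :: "real^'nx^'nu" and K2 :: "real^'np^'nu"
    and L1 :: "real^'ny^'nq" and L2 :: "real^'ny^'nx" and N :: real
  assumes N1: "N \<ge> 1"
    and bA: "\<And>v. norm (A *v v) \<le> N * norm v"
    and bB: "\<And>v. norm (B *v v) \<le> N * norm v"
    and bC: "\<And>v. norm (C *v v) \<le> N * norm v"
    and bE: "\<And>v. norm (E *v v) \<le> N * norm v"
    and bEw: "\<And>v. norm (Ew *v v) \<le> N * norm v"
    and bFw: "\<And>v. norm (Fw *v v) \<le> N * norm v"
    and bCq: "\<And>v. norm (Cq *v v) \<le> N * norm v"
    and bK1: "\<And>v. norm (K1 *v v) \<le> N * norm v"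
    and bK2: "\<And>v. norm (K2 *v v) \<le> N * norm v"
    and bL1: "\<And>v. norm (L1 *v v) \<le> N * norm v"
    and bL2: "\<And>v. norm (L2 *v v) \<le> N * norm v"
    and bp: "\<And>a b. norm (p a - p b) \<le> N * norm (a - b)"
    and p0: "p 0 = 0"
begin

lemma bp0: "norm (p a) \<le> N * norm a"
  using bp[of a 0] p0 by simp

lemma ctrl_diff: "norm (ctrl K1 K2 Cq p a - ctrl K1 K2 Cq p b) \<le> 2 * (N*N*N) * norm (a - b)"
proof -
  have eq: "ctrl K1 K2 Cq p a - ctrl K1 K2 Cq p b = K1 *v (a - b) + K2 *v (p (Cq *v a) - p (Cq *v b))"
    by (simp add: ctrl_def matrix_vector_mult_diff_distrib algebra_simps)
  have "norm (K2 *v (p (Cq *v a) - p (Cq *v b))) \<le> N * norm (p (Cq *v a) - p (Cq *v b))" by (rule bK2)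
  also have "\<dots> \<le> N * (N * norm (Cq *v a - Cq *v b))" using N1 bp by (intro mult_left_mono) auto
  also have "Cq *v a - Cq *v b = Cq *v (a - b)" by (simp add: matrix_vector_mult_diff_distrib)
  also have "N * (N * norm (Cq *v (a - b))) \<le> N * (N * (N * norm (a - b)))"
    using N1 bCq by (intro mult_left_mono) auto
  finally have 2: "norm (K2 *v (p (Cq *v a) - p (Cq *v b))) \<le> N*N*N * norm (a - b)" by (simp add: mult.assoc)
  have "norm (ctrl K1 K2 Cq p a - ctrl K1 K2 Cq p b) \<le> N * norm (a - b) + N*N*N * norm (a - b)"
    unfolding eq using norm_triangle_ineq[of "K1 *v (a - b)" "K2 *v (p (Cq *v a) - p (Cq *v b))"] bK1[of "a - b"] 2 by linarith
  also have "\<dots> \<le> 2 * (N*N*N) * norm (a - b)"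
  proof -
    have "N * norm (a - b) \<le> N*N*N * norm (a - b)" using N_pows[OF N1] by (intro mult_right_mono) auto
    moreover have "2 * (N*N*N) * norm (a - b) = N*N*N * norm (a - b) + N*N*N * norm (a - b)" by simp
    ultimately show ?thesis by linarith
  qed
  finally show ?thesis .
qed

lemma ctrl_bnd: "norm (ctrl K1 K2 Cq p a) \<le> 2 * (N*N*N) * norm a"
proof -
  have "ctrl K1 K2 Cq p 0 = 0" by (simp add: ctrl_def p0)
  then show ?thesis using ctrl_diff[of a 0] by simp
qed

definition MM where "MM = 4 * (N*N*N*N)"

lemma MM_pos: "MM \<ge> 1"
  using N_pows[OF N1] N1 unfolding MM_def by linarith

lemma plant_bnd:
  "norm (plant_dx A B E Ew Cq p x (ctrl K1 K2 Cq p xs) w) \<le> MM * (norm x + norm xh + norm xs + norm w)"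
proof -
  let ?u = "ctrl K1 K2 Cq p xs"
  have "norm (plant_dx A B E Ew Cq p x ?u w) \<le> norm (A *v x) + norm (B *v ?u) + norm (E *v p (Cq *v x)) + norm (Ew *v w)"
    unfolding plant_dx_def by (rule norm4)
  moreover have "norm (B *v ?u) \<le> N * (2 * (N*N*N) * norm xs)"
    using bB[of ?u] ctrl_bnd[of xs] N1 by (meson order_trans mult_left_mono N_pows(5)[OF N1])
  moreover have "norm (E *v p (Cq *v x)) \<le> N * (N * (N * norm x))"
  proof -
    have "norm (E *v p (Cq *v x)) \<le> N * norm (p (Cq *v x))" by (rule bE)
    also have "\<dots> \<le> N * (N * norm (Cq *v x))" using bp0 N1 by (intro mult_left_mono) auto
    also have "\<dots> \<le> N * (N * (N * norm x))" using bCq N1 by (intro mult_left_mono) auto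
    finally show ?thesis .
  qed
  moreover note bA[of x] bEw[of w]
  moreover have "N * norm x \<le> N*N*N*N * norm x" "N*N*N * norm x \<le> N*N*N*N * norm x" "N * norm w \<le> N*N*N*N * norm w"
    using N_pows[OF N1] by (auto intro: mult_right_mono)
  moreover have "0 \<le> N*N*N*N * norm xh" using N_pows[OF N1] by simp
  moreover have "N * (2 * (N*N*N) * norm xs) = 2 * (N*N*N*N * norm xs)" "N * (N * (N * norm x)) = N*N*N * norm x"
    by (simp_all add: algebra_simps)
  moreover have "MM * (norm x + norm xh + norm xs + norm w) = 4 * (N*N*N*N * norm x) + 4 * (N*N*N*N * norm xh) + 4 * (N*N*N*N * norm xs) + 4 * (N*N*N*N * norm w)"
    by (simp add: MM_def algebra_simps)
  moreover have "0 \<le> N*N*N*N * norm x" "0 \<le> N*N*N*N * norm w" "0 \<le> N*N*N*N * norm xs" using N_pows[OF N1] by auto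
  ultimately show ?thesis by linarith
qed

lemma obs_bnd:
  "norm (obs_dxh A B C D E Cq L1 L2 p xh (ctrl K1 K2 Cq p xs) (plant_y C D Fw x (ctrl K1 K2 Cq p xs) w))
     \<le> MM * (norm x + norm xh + norm xs + norm w)"
proof -
  let ?u = "ctrl K1 K2 Cq p xs"
  define d where "d = C *v xh - C *v x - Fw *v w"
  have obs_eq: "obs_dxh A B C D E Cq L1 L2 p xh ?u (plant_y C D Fw x ?u w)
     = A *v xh + B *v ?u + E *v p (Cq *v xh + L1 *v d) + L2 *v d"
    by (simp add: obs_dxh_def plant_y_def d_def Let_def algebra_simps)
  have nd: "norm d \<le> N * norm xh + N * norm x + N * norm w"
  proof -
    have "norm d \<le> norm (C *v xh) + norm (C *v x) + norm (Fw *v w)"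
      unfolding d_def by (metis (no_types, opaque_lifting) add_mono norm_triangle_ineq4 order.trans diff_conv_add_uminus norm_minus_cancel order_refl norm_triangle_ineq)
    then show ?thesis using bC[of xh] bC[of x] bFw[of w] by linarith
  qed
  have t: "norm (obs_dxh A B C D E Cq L1 L2 p xh ?u (plant_y C D Fw x ?u w))
     \<le> norm (A *v xh) + norm (B *v ?u) + norm (E *v p (Cq *v xh + L1 *v d)) + norm (L2 *v d)"
    unfolding obs_eq by (rule norm4)
  have bu: "norm (B *v ?u) \<le> N * (2 * (N*N*N) * norm xs)"
    using bB[of ?u] ctrl_bnd[of xs] N1 by (meson order_trans mult_left_mono N_pows(5)[OF N1])
  have be: "norm (E *v p (Cq *v xh + L1 *v d)) \<le> N * (N * (N * norm xh + N * norm d))"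
  proof -
    have "norm (E *v p (Cq *v xh + L1 *v d)) \<le> N * norm (p (Cq *v xh + L1 *v d))" by (rule bE)
    also have "\<dots> \<le> N * (N * norm (Cq *v xh + L1 *v d))" using bp0 N1 by (intro mult_left_mono) auto
    also have "norm (Cq *v xh + L1 *v d) \<le> N * norm xh + N * norm d"
      using norm_triangle_ineq[of "Cq *v xh" "L1 *v d"] bCq[of xh] bL1[of d] by linarith
    then have "N * (N * norm (Cq *v xh + L1 *v d)) \<le> N * (N * (N * norm xh + N * norm d))"
      using N1 by (intro mult_left_mono) auto
    finally show ?thesis .
  qed
  have bl2: "norm (L2 *v d) \<le> N * norm d" by (rule bL2)
  have P: "N \<le> N*N*N*N" "N*N \<le> N*N*N*N" "N*N*N \<le> N*N*N*N" "0 \<le> N" using N_pows[OF N1] by auto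
  have nx: "0 \<le> norm x" "0 \<le> norm xh" "0 \<le> norm xs" "0 \<le> norm w" by auto
  have e1: "N * (N * (N * norm xh + N * norm d)) \<le> N*N*N * norm xh + N*N*N*N*(norm xh + norm x + norm w)"
  proof -
    have "N * (N * (N * norm d)) \<le> N * (N * (N * (N * norm xh + N * norm x + N * norm w)))"
      using nd P(4) by (intro mult_left_mono) auto
    then show ?thesis by (simp add: algebra_simps)
  qed
  have l2: "N * norm d \<le> N * N * (norm xh + norm x + norm w)"
    using mult_left_mono[OF nd P(4)] by (simp add: algebra_simps)
  have sc: "N * norm xh \<le> N*N*N*N * norm xh" "N*N*N * norm xh \<le> N*N*N*N * norm xh"
     "N * N * (norm xh + norm x + norm w) \<le> N*N*N*N * (norm xh + norm x + norm w)"
    using P nx by (auto intro: mult_right_mono)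
  have "0 \<le> N*N*N*N * norm x" "0 \<le> N*N*N*N * norm w" "0 \<le> N*N*N*N * norm xh" "0 \<le> N*N*N*N * norm xs" using P nx by auto
  moreover have "N * (2 * (N*N*N) * norm xs) = 2 * (N*N*N*N * norm xs)" by (simp add: algebra_simps)
  moreover have "N*N*N*N * (norm xh + norm x + norm w) = N*N*N*N * norm xh + N*N*N*N * norm x + N*N*N*N * norm w"
    by (simp add: algebra_simps)
  moreover have "MM * (norm x + norm xh + norm xs + norm w) = 4 * (N*N*N*N * norm x) + 4 * (N*N*N*N * norm xh) + 4 * (N*N*N*N * norm xs) + 4 * (N*N*N*N * norm w)"
    by (simp add: MM_def algebra_simps)
  ultimately show ?thesis using t bu be e1 bA[of xh] bl2 l2 sc by linarith
qed

definition fE where "fE x xs w = plant_dx A B E Ew Cq p x (ctrl K1 K2 Cq p xs) w"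
definition gE where "gE x xh xs w = obs_dxh A B C D E Cq L1 L2 p xh (ctrl K1 K2 Cq p xs) (plant_y C D Fw x (ctrl K1 K2 Cq p xs) w)"

lemma norm_stack0: "norm (stack a 0) = norm a"
  using norm_stack_sq[of a 0] by (simp add: power2_eq_iff_nonneg)

lemma lyap_et:
  fixes P :: "real^('nx + 'nx)^('nx + 'nx)"
  assumes lyap: "cl_lyap A B C D E Ew Fw Cq p K1 K2 L1 L2 P \<alpha>0 \<mu> \<omega>0"
    and KPb: "\<And>v. norm (P *v v) \<le> KP * norm v" and KP0: "KP \<ge> 0"
    and w: "norm w \<le> \<omega>0"
  shows "stack (fE x xs w) (fE x xs w - gE x xh xs w) \<bullet> (P *v stack x (x - xh))
       + stack x (x - xh) \<bullet> (P *v stack (fE x xs w) (fE x xs w - gE x xh xs w))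
     \<le> - \<alpha>0 * (stack x (x - xh) \<bullet> (P *v stack x (x - xh))) + \<mu> * (norm w)\<^sup>2
       + 2 * KP * (2 * (N*N*N*N)) * norm (xs - xh) * norm (stack x (x - xh))"
proof -
  define z where "z = stack x (x - xh)"
  define f0 where "f0 = plant_dx A B E Ew Cq p x (ctrl K1 K2 Cq p xh) w"
  define g0 where "g0 = obs_dxh A B C D E Cq L1 L2 p xh (ctrl K1 K2 Cq p xh) (plant_y C D Fw x (ctrl K1 K2 Cq p xh) w)"
  define dz0 where "dz0 = stack f0 (f0 - g0)"
  define bd where "bd = B *v (ctrl K1 K2 Cq p xs - ctrl K1 K2 Cq p xh)"
  have L0: "dz0 \<bullet> (P *v z) + z \<bullet> (P *v dz0) \<le> - \<alpha>0 * (z \<bullet> (P *v z)) + \<mu> * (norm w)\<^sup>2"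
    using lyap w unfolding cl_lyap_def Let_def z_def dz0_def f0_def g0_def by blast
  have e1: "fE x xs w = f0 + bd"
    by (simp add: fE_def f0_def bd_def plant_dx_def matrix_vector_mult_diff_distrib algebra_simps)
  have e2: "fE x xs w - gE x xh xs w = f0 - g0"
    by (simp add: fE_def gE_def f0_def g0_def plant_dx_def obs_dxh_def plant_y_def Let_def algebra_simps)
  have dz: "stack (fE x xs w) (fE x xs w - gE x xh xs w) = dz0 + stack bd 0"
    unfolding e2 unfolding e1 dz0_def using stack_add[of f0 bd "f0 - g0" 0] by simp
  have nbd: "norm bd \<le> 2 * (N*N*N*N) * norm (xs - xh)"
  proof -
    have "norm bd \<le> N * norm (ctrl K1 K2 Cq p xs - ctrl K1 K2 Cq p xh)" unfolding bd_def by (rule bB)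
    also have "\<dots> \<le> N * (2 * (N*N*N) * norm (xs - xh))" using ctrl_diff N1 by (intro mult_left_mono) auto
    finally show ?thesis by (simp add: algebra_simps)
  qed
  have q1: "stack bd 0 \<bullet> (P *v z) \<le> KP * norm bd * norm z"
    using quad_upper[OF KPb, of "stack bd 0" z] by (simp add: norm_stack0)
  have q2: "z \<bullet> (P *v stack bd 0) \<le> KP * norm bd * norm z"
    using quad_upper[OF KPb, of z "stack bd 0"] by (simp add: norm_stack0 algebra_simps)
  have q3: "KP * norm bd * norm z \<le> KP * (2 * (N*N*N*N) * norm (xs - xh)) * norm z"
    using nbd KP0 by (intro mult_right_mono mult_left_mono) auto
  have "stack (fE x xs w) (fE x xs w - gE x xh xs w) \<bullet> (P *v z) + z \<bullet> (P *v stack (fE x xs w) (fE x xs w - gE x xh xs w))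
      = (dz0 \<bullet> (P *v z) + z \<bullet> (P *v dz0)) + (stack bd 0 \<bullet> (P *v z) + z \<bullet> (P *v stack bd 0))"
    unfolding dz by (simp add: inner_add_left inner_add_right matrix_vector_right_distrib)
  also have "\<dots> \<le> - \<alpha>0 * (z \<bullet> (P *v z)) + \<mu> * (norm w)\<^sup>2 + 2 * (KP * (2 * (N*N*N*N) * norm (xs - xh)) * norm z)"
    using L0 q1 q2 q3 by linarith
  finally show ?thesis unfolding z_def by (simp add: algebra_simps)
qed

end



lemma norm_xh_le: "norm xh \<le> 2 * norm (stack x (x - xh))"
proof -
  have "norm xh = norm (x - (x - xh))" by simp
  also have "\<dots> \<le> norm x + norm (x - xh)" by (rule norm_triangle_ineq4)
  also have "\<dots> \<le> 2 * norm (stack x (x - xh))" using norm_stack_ge1[of x "x - xh"] norm_stack_ge2[of "x - xh" x] by simp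
  finally show ?thesis .
qed

lemma stack_diff_bound:
  "norm (stack x1 (x1 - h1)) \<le> norm (stack x2 (x2 - h2)) + 2 * norm (x1 - x2) + norm (h1 - h2)"
proof -
  have "stack x1 (x1 - h1) = stack x2 (x2 - h2) + stack (x1 - x2) ((x1 - x2) - (h1 - h2))"
    using stack_add[of x2 "x1 - x2" "x2 - h2" "(x1 - x2) - (h1 - h2)"] by (simp add: algebra_simps)
  then have "norm (stack x1 (x1 - h1)) \<le> norm (stack x2 (x2 - h2)) + norm (stack (x1 - x2) ((x1 - x2) - (h1 - h2)))"
    by (metis norm_triangle_ineq)
  also have "norm (stack (x1 - x2) ((x1 - x2) - (h1 - h2))) \<le> norm (x1 - x2) + norm ((x1 - x2) - (h1 - h2))"
    by (rule norm_stack_le)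
  also have "norm ((x1 - x2) - (h1 - h2)) \<le> norm (x1 - x2) + norm (h1 - h2)" by (rule norm_triangle_ineq4)
  finally show ?thesis by simp
qed

lemma phase1:
  fixes x xh xs F G :: "real \<Rightarrow> real^'n"
  assumes ct: "c \<le> t" "t \<le> c + \<tau>"
    and M0: "M \<ge> 0" and th: "\<theta> = \<tau> * M" "\<theta> \<le> 1/60" and tau0: "\<tau> \<ge> 0" and w0: "\<omega>0 \<ge> 0"
    and intF: "\<And>a b. c \<le> a \<Longrightarrow> a \<le> b \<Longrightarrow> b \<le> t \<Longrightarrow> (F has_integral (x b - x a)) {a..b}"
    and intG: "\<And>a b. c \<le> a \<Longrightarrow> a \<le> b \<Longrightarrow> b \<le> t \<Longrightarrow> (G has_integral (xh b - xh a)) {a..b}"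
    and bF: "\<And>r. r \<in> {c..t} \<Longrightarrow> norm (F r) \<le> M * (norm (x r) + norm (xh r) + norm (xs r) + \<omega>0)"
    and bG: "\<And>r. r \<in> {c..t} \<Longrightarrow> norm (G r) \<le> M * (norm (x r) + norm (xh r) + norm (xs r) + \<omega>0)"
    and xs: "\<And>r. r \<in> {c..t} \<Longrightarrow> xs r = xh c"
    and cont: "continuous_on {c..t} (\<lambda>r. norm (stack (x r) (x r - xh r)))"
  shows "norm (xh c - xh t) \<le> \<theta> * (10 * norm (stack (x t) (x t - xh t)) + 2 * \<omega>0)"
proof -
  define nz where "nz r = norm (stack (x r) (x r - xh r))" for r
  have th0: "\<theta> \<ge> 0" using th tau0 M0 by simp
  obtain r0 where r0: "r0 \<in> {c..t}" "\<And>r. r \<in> {c..t} \<Longrightarrow> nz r \<le> nz r0"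
    using continuous_attains_sup[OF compact_Icc _ cont] ct unfolding nz_def by auto
  define S where "S = nz r0"
  have S0: "S \<ge> 0" by (simp add: S_def nz_def)
  have nzS: "nz r \<le> S" if "r \<in> {c..t}" for r using r0 that S_def by auto
  define Bd where "Bd = M * (5 * S + \<omega>0)"
  have Bd0: "Bd \<ge> 0" using M0 S0 w0 by (simp add: Bd_def)
  have cin: "c \<in> {c..t}" using ct by simp
  have pre: "norm (x r) + norm (xh r) + norm (xs r) + \<omega>0 \<le> 5 * S + \<omega>0" if r: "r \<in> {c..t}" for r
  proof -
    have "norm (x r) \<le> nz r" unfolding nz_def by (rule norm_stack_ge1)
    moreover have "norm (xh r) \<le> 2 * nz r" unfolding nz_def by (rule norm_xh_le)
    moreover have "norm (xs r) \<le> 2 * nz c" unfolding nz_def using xs[OF r] by (simp add: norm_xh_le)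
    ultimately show ?thesis using nzS[OF r] nzS[OF cin] by linarith
  qed
  have bF': "norm (F r) \<le> Bd" if "r \<in> {c..t}" for r
    using bF[OF that] mult_left_mono[OF pre[OF that] M0] by (simp add: Bd_def)
  have bG': "norm (G r) \<le> Bd" if "r \<in> {c..t}" for r
    using bG[OF that] mult_left_mono[OF pre[OF that] M0] by (simp add: Bd_def)
  define Q where "Q = \<theta> * (5 * S + \<omega>0)"
  have BdQ: "Bd * (r - c) \<le> Q" if "r \<in> {c..t}" for r
  proof -
    have "Bd * (r - c) \<le> Bd * \<tau>" using that ct Bd0 by (intro mult_left_mono) auto
    then show ?thesis by (simp add: Q_def Bd_def th algebra_simps)
  qed
  have dx: "norm (x r - x c) \<le> Q" if r: "r \<in> {c..t}" for r
  proof -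
    have "norm (x r - x c) \<le> Bd * Henstock_Kurzweil_Integration.content {c..r}"
      by (rule has_integral_bound_real[where f=F and S="{}", OF Bd0 _ intF[of c r]]) (use r bF' in auto)
    also have "\<dots> = Bd * (r - c)" using r by simp
    finally show ?thesis using BdQ[OF r] by simp
  qed
  have dxh: "norm (xh r - xh c) \<le> Q" if r: "r \<in> {c..t}" for r
  proof -
    have "norm (xh r - xh c) \<le> Bd * Henstock_Kurzweil_Integration.content {c..r}"
      by (rule has_integral_bound_real[where f=G and S="{}", OF Bd0 _ intG[of c r]]) (use r bG' in auto)
    also have "\<dots> = Bd * (r - c)" using r by simp
    finally show ?thesis using BdQ[OF r] by simp
  qed
  have nzr: "nz r \<le> nz c + 3 * Q" if r: "r \<in> {c..t}" for r
    using stack_diff_bound[of "x r" "xh r" "x c" "xh c"] dx[OF r] dxh[OF r] unfolding nz_def by linarith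
  have nzc: "nz c \<le> nz r + 3 * Q" if r: "r \<in> {c..t}" for r
    using stack_diff_bound[of "x c" "xh c" "x r" "xh r"] dx[OF r] dxh[OF r] unfolding nz_def
    by (simp add: norm_minus_commute)
  define a where "a = \<theta> * \<omega>0"
  have a0: "a \<ge> 0" using th0 w0 by (simp add: a_def)
  have Qe: "Q = 5 * (\<theta> * S) + a" by (simp add: Q_def a_def algebra_simps)
  have f1: "\<theta> * S \<le> S / 60" using mult_right_mono[OF th(2) S0] by simp
  have S1: "S \<le> nz c + 3 * Q" using nzr[OF r0(1)] by (simp add: S_def)
  have Sb: "S \<le> 4/3 * nz c + 4 * a" using S1 f1 Qe by linarith
  have f2: "\<theta> * S \<le> 4/3 * (\<theta> * nz c) + 4 * (\<theta> * a)"
    using mult_left_mono[OF Sb th0] by (simp add: algebra_simps)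
  have nzc0: "nz c \<ge> 0" by (simp add: nz_def)
  have f3: "\<theta> * nz c \<le> nz c / 60" using mult_right_mono[OF th(2) nzc0] by simp
  have f4: "\<theta> * a \<le> a / 60" using mult_right_mono[OF th(2) a0] by simp
  have tin: "t \<in> {c..t}" using ct by simp
  have C1: "nz c \<le> 3/2 * nz t + 6 * a"
    using nzc[OF tin] Qe f2 f3 f4 by linarith
  have f5: "\<theta> * nz c \<le> 3/2 * (\<theta> * nz t) + 6 * (\<theta> * a)"
    using mult_left_mono[OF C1 th0] by (simp add: algebra_simps)
  have "norm (xh c - xh t) \<le> Q" using dxh[OF tin] by (simp add: norm_minus_commute)
  also have "Q \<le> 10 * (\<theta> * nz t) + 2 * a" using Qe f2 f5 f4 by linarith
  finally show ?thesis by (simp add: a_def nz_def algebra_simps)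
qed




lemma tk_struct:
  fixes tk :: "nat \<Rightarrow> ereal"
  assumes t00: "tk 0 = 0"
   and trig: "\<forall>k. tk k < \<infinity> \<longrightarrow> tk (Suc k) = Inf (ereal ` {t. tk k + ereal \<tau> \<le> ereal t \<and> \<Phi> k t})"
   and inf: "\<forall>k. tk k = \<infinity> \<longrightarrow> tk (Suc k) = \<infinity>"
   and tau: "\<tau> > 0" and t0: "t \<ge> 0"
  shows "\<exists>k c. tk k = ereal c \<and> 0 \<le> c \<and> c \<le> t \<and> ereal t < tk (Suc k) \<and> (c + \<tau> \<le> t \<longrightarrow> \<not> \<Phi> k t)"
proof -
  have step: "tk k + ereal \<tau> \<le> tk (Suc k)" if "tk k < \<infinity>" for k
  proof -
    have "tk (Suc k) = Inf (ereal ` {t. tk k + ereal \<tau> \<le> ereal t \<and> \<Phi> k t})" using trig that by blast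
    also have "tk k + ereal \<tau> \<le> \<dots>" by (rule Inf_greatest) auto
    finally show ?thesis by simp
  qed
  have lower: "ereal (real k * \<tau>) \<le> tk k" for k
  proof (induction k)
    case 0 then show ?case using t00 by (simp add: zero_ereal_def)
  next
    case (Suc k)
    show ?case
    proof (cases "tk k = \<infinity>")
      case True then show ?thesis using inf by simp
    next
      case False
      then have fin: "tk k < \<infinity>" by (cases "tk k") auto
      have "ereal (real (Suc k) * \<tau>) = ereal (real k * \<tau>) + ereal \<tau>" by (simp add: algebra_simps)
      also have "\<dots> \<le> tk k + ereal \<tau>" by (rule add_right_mono[OF Suc.IH])
      also have "\<dots> \<le> tk (Suc k)" by (rule step[OF fin])
      finally show ?thesis .
    qed
  qed
  define K where "K = {k. tk k \<le> ereal t}"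
  have Kb: "K \<subseteq> {..nat (ceiling (t / \<tau>))}"
  proof
    fix k assume "k \<in> K"
    then have "ereal (real k * \<tau>) \<le> ereal t" using lower[of k] unfolding K_def by (metis (no_types, lifting) mem_Collect_eq order.trans)
    then have "real k * \<tau> \<le> t" by simp
    then have "real k \<le> t / \<tau>" using tau by (simp add: field_simps)
    then have "real k \<le> real (nat (ceiling (t / \<tau>)))" by linarith
    then show "k \<in> {..nat (ceiling (t / \<tau>))}" by simp
  qed
  have finK: "finite K" using Kb finite_subset by blast
  have K0: "0 \<in> K" using t00 t0 by (simp add: K_def zero_ereal_def)
  define k where "k = Max K"
  have Kne: "K \<noteq> {}" using K0 by blast
  have kK: "k \<in> K" unfolding k_def by (rule Max_in[OF finK Kne])
  have "Suc k \<notin> K"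
  proof
    assume "Suc k \<in> K"
    then have "Suc k \<le> k" unfolding k_def by (rule Max_ge[OF finK])
    then show False by simp
  qed
  then have lt: "ereal t < tk (Suc k)" by (simp add: K_def not_le)
  have le: "tk k \<le> ereal t" using kK by (simp add: K_def)
  have ge0: "0 \<le> tk k" using lower[of k] tau by (metis ereal_less_eq(5) mult_nonneg_nonneg of_nat_0_le_iff order_less_imp_le order_trans)
  obtain c where c: "tk k = ereal c" using le ge0 by (cases "tk k") auto
  have c0: "0 \<le> c" "c \<le> t" using le ge0 c by auto
  have trg: "\<not> \<Phi> k t" if ct: "c + \<tau> \<le> t"
  proof
    assume ph: "\<Phi> k t"
    have fin: "tk k < \<infinity>" using c by simp
    have "ereal t \<in> ereal ` {t. tk k + ereal \<tau> \<le> ereal t \<and> \<Phi> k t}" using ph ct c by auto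
    then have "tk (Suc k) \<le> ereal t" using trig fin by (metis Inf_lower)
    then show False using lt by simp
  qed
  show ?thesis using c c0 lt trg by blast
qed




lemma exp_neg_tendsto: fixes a :: real assumes "a > 0" shows "((\<lambda>t. exp (- (a * t))) \<longlongrightarrow> 0) at_top"
proof -
  have "filterlim (\<lambda>t. a * t) at_top at_top"
    by (intro filterlim_tendsto_pos_mult_at_top[where c=a] tendsto_const filterlim_ident assms)
  then have "filterlim (\<lambda>t. - (a * t)) at_bot at_top" by (simp add: filterlim_uminus_at_bot)
  then show ?thesis by (rule filterlim_compose[OF exp_at_bot])
qed

lemma classK_id: "class_K (\<lambda>s. s)"
  unfolding class_K_def by (auto simp: strict_mono_on_def intro: continuous_intros)

lemma classKL_exp:
  assumes K: "K > 0" and a: "a > 0"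
  shows "class_KL (\<lambda>s t. K * s * exp (- (a * t)))"
proof -
  have 1: "class_K (\<lambda>s. K * s * exp (- (a * t)))" for t
    unfolding class_K_def using K by (auto simp: strict_mono_on_def intro!: continuous_intros)
  have 2: "K * s * exp (- (a * t2)) \<le> K * s * exp (- (a * t1))" if "s \<ge> 0" "t1 \<le> t2" for s t1 t2
    using K that a by (auto intro!: mult_left_mono mult_nonneg_nonneg)
  have 3: "((\<lambda>t. K * s * exp (- (a * t))) \<longlongrightarrow> 0) at_top" for s
    using tendsto_mult_right_zero[OF exp_neg_tendsto[OF a], of "K * s"] by simp
  show ?thesis unfolding class_KL_def using 1 2 3 by blast
qed

lemma sub_int:
  fixes f X :: "real \<Rightarrow> 'b::euclidean_space" and a b :: real
  assumes "\<forall>t\<ge>0. (f has_integral (X t - X 0)) {0..t}" "0 \<le> a" "a \<le> b"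
  shows "(f has_integral (X b - X a)) {a..b}"
proof -
  have b0: "0 \<le> b" using assms by linarith
  have ib: "(f has_integral (X b - X 0)) {0..b}" using assms(1) b0 by blast
  have ia: "(f has_integral (X a - X 0)) {0..a}" using assms(1) assms(2) by blast
  have "f integrable_on {a..b}"
    by (rule integrable_subinterval_real[OF has_integral_integrable[OF ib]]) (use assms in auto)
  then have j: "(f has_integral integral {a..b} f) {a..b}" by auto
  have "(f has_integral (X a - X 0) + integral {a..b} f) {0..b}"
    by (rule has_integral_combine[OF assms(2) assms(3) ia j])
  then have "(X a - X 0) + integral {a..b} f = X b - X 0" using ib by (rule has_integral_unique)
  then have "integral {a..b} f = X b - X a" by (simp add: algebra_simps)
  then show ?thesis using j by simp
qed

lemma cont_int:
  fixes f X :: "real \<Rightarrow> 'b::euclidean_space" and T :: real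
  assumes "\<forall>t\<ge>0. (f has_integral (X t - X 0)) {0..t}"
  shows "continuous_on {0..T} X"
proof (cases "T \<ge> 0")
  case True
  have "f integrable_on {0..T}" using assms True by auto
  then have c: "continuous_on {0..T} (\<lambda>t. X 0 + integral {0..t} f)"
    by (rule continuous_on_add[OF continuous_on_const indefinite_integral_continuous_1])
  show ?thesis
  proof (rule continuous_on_eq[OF c])
    fix t assume "t \<in> {0..T}"
    then have "(f has_integral (X t - X 0)) {0..t}" using assms by auto
    then show "X 0 + integral {0..t} f = X t" by (simp add: integral_unique)
  qed
next
  case False then show ?thesis by simp
qed

lemma norm_stack0g: "norm (stack a 0) = norm a"
  using norm_stack_sq[of a 0] by (simp add: power2_eq_iff_nonneg)

lemma bl_stack1: "bounded_linear (\<lambda>a. stack a 0)"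
proof (rule bounded_linear_intro[where K=1])
  show "stack (a + b) 0 = stack a 0 + stack b 0" for a b using stack_add[of a b 0 0] by simp
  show "stack (r *\<^sub>R a) 0 = r *\<^sub>R stack a 0" for r a using stack_scaleR[of r a 0] by simp
  show "norm (stack a 0) \<le> norm a * 1" for a by (simp add: norm_stack0g)
qed

lemma norm_stack0': "norm (stack 0 b) = norm b"
  using norm_stack_sq[of 0 b] by (simp add: power2_eq_iff_nonneg)

lemma bl_stack2: "bounded_linear (\<lambda>b. stack 0 b)"
proof (rule bounded_linear_intro[where K=1])
  show "stack 0 (a + b) = stack 0 a + stack 0 b" for a b using stack_add[of 0 0 a b] by simp
  show "stack 0 (r *\<^sub>R a) = r *\<^sub>R stack 0 a" for r a using stack_scaleR[of r 0 a] by simp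
  show "norm (stack 0 a) \<le> norm a * 1" for a by (simp add: norm_stack0')
qed

lemma stack_split: "stack a b = stack a 0 + stack 0 b"
  using stack_add[of a 0 0 b] by simp

lemma cont_stack:
  assumes "continuous_on S f" "continuous_on S g"
  shows "continuous_on S (\<lambda>r. stack (f r) (g r))"
proof -
  have "continuous_on S (\<lambda>r. stack (f r) 0 + stack 0 (g r))"
    by (intro continuous_on_add bounded_linear.continuous_on[OF bl_stack1 assms(1)]
        bounded_linear.continuous_on[OF bl_stack2 assms(2)])
  then show ?thesis by (subst stack_split) simp
qed

lemma int_stack:
  assumes "(f has_integral i) S" "(g has_integral j) S"
  shows "((\<lambda>r. stack (f r) (g r)) has_integral stack i j) S"
proof -
  have "((\<lambda>r. stack (f r) 0 + stack 0 (g r)) has_integral (stack i 0 + stack 0 j)) S"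
    using has_integral_add[OF has_integral_linear[OF assms(1) bl_stack1] has_integral_linear[OF assms(2) bl_stack2]]
    by (simp add: o_def)
  then show ?thesis by (metis (no_types, lifting) stack_split has_integral_cong)
qed

lemma sqrt_exp_half: "sqrt (exp y) = exp (y / 2)"
proof -
  have "exp y = (exp (y / 2))\<^sup>2" by (simp add: power2_eq_square exp_add[symmetric])
  then show ?thesis by simp
qed




lemma amgm: fixes q b n :: real assumes "q > 0" shows "b * n \<le> q / 4 * n\<^sup>2 + b\<^sup>2 / q"
proof -
  have e: "q / 4 * n\<^sup>2 + b\<^sup>2 / q - b * n = (q * n / 2 - b)\<^sup>2 / q"
    using assms by (simp add: field_simps power2_eq_square)
  have "(q * n / 2 - b)\<^sup>2 / q \<ge> 0" using assms by simp
  then show ?thesis using e by linarith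
qed

context bnds begin

lemma Fb: "norm w \<le> \<omega>0 \<Longrightarrow> norm (fE x xs w) \<le> MM * (norm x + norm xh + norm xs + \<omega>0)"
  using plant_bnd[of x xs w xh] MM_pos unfolding fE_def
  by (smt (verit, ccfv_SIG) mult_left_mono)

lemma Gb: "norm w \<le> \<omega>0 \<Longrightarrow> norm (gE x xh xs w) \<le> MM * (norm x + norm xh + norm xs + \<omega>0)"
  using obs_bnd[of xh xs x w] MM_pos unfolding gE_def
  by (smt (verit, ccfv_SIG) mult_left_mono)

end



context bnds begin

lemma main:
  fixes P :: "real^('nx + 'nx)^('nx + 'nx)" and \<omega>0 \<alpha>0 \<mu> KP c1 :: real
  assumes lyap: "cl_lyap A B C D E Ew Fw Cq p K1 K2 L1 L2 P \<alpha>0 \<mu> \<omega>0"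
    and KPb: "\<And>v. norm (P *v v) \<le> KP * norm v" and KP1: "KP \<ge> 1"
    and c1: "c1 > 0" and c1b: "\<And>z. c1 * (norm z)\<^sup>2 \<le> z \<bullet> (P *v z)"
    and w0: "\<omega>0 > 0" and a0: "\<alpha>0 > 0" and mu0: "\<mu> > 0"
    and k0_def: "k0 = 2 * KP * (2 * (N*N*N*N))"
    and th_def: "\<theta> = min (1/60) (\<alpha>0 * c1 / (40 * k0))"
    and tau_def: "\<tau> = \<theta> / MM"
  shows "ISpS_et A B C D E Ew Fw Cq p K1 K2 L1 L2 \<tau> \<theta> \<omega>0 \<omega>0"
proof -
  have k0: "k0 > 0" using k0_def KP1 N_pows[OF N1] N1 by (simp add: mult_pos_pos)
  have th0: "\<theta> > 0" using th_def a0 c1 k0 by simp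
  have th1: "\<theta> \<le> 1/60" using th_def by simp
  have th2: "10 * \<theta> * k0 \<le> \<alpha>0 * c1 / 4"
  proof -
    have "\<theta> \<le> \<alpha>0 * c1 / (40 * k0)" using th_def by simp
    then have "\<theta> * (40 * k0) \<le> \<alpha>0 * c1" using k0 by (simp add: field_simps)
    then show ?thesis by simp
  qed
  have MM1: "MM \<ge> 1" by (rule MM_pos)
  have tau0: "\<tau> > 0" using th0 MM1 tau_def by simp
  have thtau: "\<theta> = \<tau> * MM" using MM1 tau_def by simp
  define c0 where "c0 = \<mu> * \<omega>0\<^sup>2 + k0\<^sup>2 * \<omega>0\<^sup>2 / (\<alpha>0 * c1)"
  have c00: "c0 \<ge> 0" using mu0 a0 c1 by (simp add: c0_def)
  define Kb where "Kb = sqrt (KP / c1)"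
  have Kb0: "Kb > 0" using KP1 c1 by (simp add: Kb_def)
  define dd where "dd = sqrt (2 * c0 / (\<alpha>0 * c1))"
  have dd0: "dd \<ge> 0" using c00 a0 c1 by (simp add: dd_def)
  have KL: "class_KL (\<lambda>s t. Kb * s * exp (- (\<alpha>0 / 4 * t)))"
    by (rule classKL_exp[OF Kb0]) (use a0 in simp)
  have bound: "norm (stack (x t) (x t - xh t))
      \<le> Kb * norm (stack (x 0) (x 0 - xh 0)) * exp (- (\<alpha>0 / 4 * t)) + sup_norm w + dd"
    if adm: "admissible_dist \<omega>0 w" and sol: "et_solution A B C D E Ew Fw Cq p K1 K2 L1 L2 \<tau> \<theta> \<omega>0 w x xh xs tk"
      and t0: "t \<ge> 0"
    for w :: "real \<Rightarrow> real^'nw" and x xh xs :: "real \<Rightarrow> real^'nx" and tk t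
  proof -
    have wb: "\<And>r. r \<ge> 0 \<Longrightarrow> norm (w r) \<le> \<omega>0" using adm unfolding admissible_dist_def by blast
    have tk0: "tk 0 = 0"
      and trig: "\<forall>k. tk k < \<infinity> \<longrightarrow> tk (Suc k) = Inf (ereal ` {t. tk k + ereal \<tau> \<le> ereal t \<and>
                          norm (xh (real_of_ereal (tk k)) - xh t) > \<theta> * norm (xh t) + \<omega>0})"
      and inf: "\<forall>k. tk k = \<infinity> \<longrightarrow> tk (Suc k) = \<infinity>"
      and hold: "\<forall>k t. tk k \<le> ereal t \<and> ereal t < tk (Suc k) \<longrightarrow> xs t = xh (real_of_ereal (tk k))"
      and intx: "\<forall>t\<ge>0. ((\<lambda>s. plant_dx A B E Ew Cq p (x s) (ctrl K1 K2 Cq p (xs s)) (w s))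
               has_integral (x t - x 0)) {0..t}"
      and intxh: "\<forall>t\<ge>0. ((\<lambda>s. obs_dxh A B C D E Cq L1 L2 p (xh s) (ctrl K1 K2 Cq p (xs s))
                   (plant_y C D Fw (x s) (ctrl K1 K2 Cq p (xs s)) (w s)))
               has_integral (xh t - xh 0)) {0..t}"
      using sol unfolding et_solution_def by auto
    define F where "F r = fE (x r) (xs r) (w r)" for r
    define G where "G r = gE (x r) (xh r) (xs r) (w r)" for r
    have intF: "\<forall>t\<ge>0. (F has_integral (x t - x 0)) {0..t}" using intx unfolding F_def fE_def .
    have intG: "\<forall>t\<ge>0. (G has_integral (xh t - xh 0)) {0..t}" using intxh unfolding G_def gE_def .
    have intF': "(F has_integral (x b - x a)) {a..b}" if "0 \<le> a" "a \<le> b" for a b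
      by (rule sub_int[OF intF that])
    have intG': "(G has_integral (xh b - xh a)) {a..b}" if "0 \<le> a" "a \<le> b" for a b
      by (rule sub_int[OF intG that])
    have cx: "continuous_on {0..T} x" for T by (rule cont_int[OF intF])
    have cxh: "continuous_on {0..T} xh" for T by (rule cont_int[OF intG])
    define z where "z r = stack (x r) (x r - xh r)" for r
    define nz where "nz r = norm (z r)" for r
    define V where "V r = z r \<bullet> (P *v z r)" for r
    have cz: "continuous_on {0..T} z" for T
      unfolding z_def by (intro cont_stack continuous_on_diff cx cxh)
    have cnz: "continuous_on {0..T} nz" for T
      unfolding nz_def by (intro continuous_on_norm cz)
    have cV: "continuous_on {0..T} V" for T
      unfolding V_def by (intro continuous_on_inner cz bounded_linear.continuous_on[OF matrix_vector_mul_bounded_linear])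
    have ebound: "norm (xs r - xh r) \<le> 10 * \<theta> * nz r + \<omega>0" if r0: "r \<ge> 0" for r
    proof -
      have "\<exists>k c. tk k = ereal c \<and> 0 \<le> c \<and> c \<le> r \<and> ereal r < tk (Suc k) \<and>
          (c + \<tau> \<le> r \<longrightarrow> \<not> (norm (xh (real_of_ereal (tk k)) - xh r) > \<theta> * norm (xh r) + \<omega>0))"
        by (rule tk_struct[where \<Phi>="\<lambda>k t. norm (xh (real_of_ereal (tk k)) - xh t) > \<theta> * norm (xh t) + \<omega>0"])
           (use tk0 trig inf tau0 r0 in auto)
      then obtain k c where kc: "tk k = ereal c" "0 \<le> c" "c \<le> r" "ereal r < tk (Suc k)"
          "c + \<tau> \<le> r \<Longrightarrow> \<not> (norm (xh (real_of_ereal (tk k)) - xh r) > \<theta> * norm (xh r) + \<omega>0)"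
        by blast
      have hold': "xs r' = xh c" if "r' \<in> {c..r}" for r'
      proof -
        have "tk k \<le> ereal r'" using kc(1) that by simp
        moreover have "ereal r' < tk (Suc k)" using kc(4) that by (meson atLeastAtMost_iff ereal_less_eq(3) order_le_less_trans)
        ultimately have "xs r' = xh (real_of_ereal (tk k))" using hold by blast
        then show ?thesis using kc(1) by simp
      qed
      have xsr: "xs r = xh c" using hold' kc by simp
      have nxh: "norm (xh r) \<le> 2 * nz r" unfolding nz_def z_def by (rule norm_xh_le)
      have nzn: "nz r \<ge> 0" by (simp add: nz_def)
      have thn: "0 \<le> \<theta> * nz r" using th0 nzn by simp
      show ?thesis
      proof (cases "c + \<tau> \<le> r")
        case True
        then have "norm (xh c - xh r) \<le> \<theta> * norm (xh r) + \<omega>0" using kc(5) kc(1) by simp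
        also have "\<theta> * norm (xh r) \<le> \<theta> * (2 * nz r)" using nxh th0 by (intro mult_left_mono) auto
        finally have "norm (xh c - xh r) \<le> 2 * (\<theta> * nz r) + \<omega>0" by simp
        then show ?thesis using xsr thn mult.assoc[of 10 \<theta> "nz r"] by simp
      next
        case False
        have "norm (xh c - xh r) \<le> \<theta> * (10 * norm (stack (x r) (x r - xh r)) + 2 * \<omega>0)"
        proof (rule phase1[where M=MM and F=F and G=G and xs=xs])
          show "c \<le> r" "r \<le> c + \<tau>" using kc False by auto
          show "0 \<le> MM" using MM1 by simp
          show "\<theta> = \<tau> * MM" by (rule thtau)
          show "\<theta> \<le> 1/60" by (rule th1)
          show "\<tau> \<ge> 0" "\<omega>0 \<ge> 0" using tau0 w0 by auto
          show "(F has_integral (x b - x a)) {a..b}" if "c \<le> a" "a \<le> b" "b \<le> r" for a b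
            using intF' that kc(2) by simp
          show "(G has_integral (xh b - xh a)) {a..b}" if "c \<le> a" "a \<le> b" "b \<le> r" for a b
            using intG' that kc(2) by simp
          show "norm (F r') \<le> MM * (norm (x r') + norm (xh r') + norm (xs r') + \<omega>0)" if "r' \<in> {c..r}" for r'
            unfolding F_def by (rule Fb[OF wb]) (use that kc in auto)
          show "norm (G r') \<le> MM * (norm (x r') + norm (xh r') + norm (xs r') + \<omega>0)" if "r' \<in> {c..r}" for r'
            unfolding G_def by (rule Gb[OF wb]) (use that kc in auto)
          show "xs r' = xh c" if "r' \<in> {c..r}" for r' by (rule hold'[OF that])
          show "continuous_on {c..r} (\<lambda>r. norm (stack (x r) (x r - xh r)))"
            using continuous_on_subset[OF cnz[of r]] kc unfolding nz_def z_def by auto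
        qed
        then have "norm (xh c - xh r) \<le> 10 * (\<theta> * nz r) + 2 * (\<theta> * \<omega>0)"
          by (simp add: nz_def z_def algebra_simps)
        moreover have "2 * (\<theta> * \<omega>0) \<le> \<omega>0" using mult_right_mono[OF th1, of \<omega>0] w0 by simp
        ultimately show ?thesis using xsr mult.assoc[of 10 \<theta> "nz r"] by simp
      qed
    qed
    have LETb: "stack (F r) (F r - G r) \<bullet> (P *v z r) + z r \<bullet> (P *v stack (F r) (F r - G r))
        \<le> - (\<alpha>0 / 2) * V r + c0" if r0: "r \<ge> 0" for r
    proof -
      define n where "n = nz r"
      define e where "e = norm (xs r - xh r)"
      have n0: "n \<ge> 0" by (simp add: n_def nz_def)
      have L: "stack (F r) (F r - G r) \<bullet> (P *v z r) + z r \<bullet> (P *v stack (F r) (F r - G r))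
          \<le> - \<alpha>0 * V r + \<mu> * (norm (w r))\<^sup>2 + k0 * e * n"
        using lyap_et[OF lyap KPb _ wb[OF r0], of "x r" "xs r" "xh r"] KP1
        unfolding F_def G_def z_def V_def n_def nz_def e_def k0_def by simp
      have eb: "e \<le> 10 * \<theta> * n + \<omega>0" using ebound[OF r0] by (simp add: e_def n_def)
      have s1: "k0 * e * n \<le> k0 * (10 * \<theta> * n + \<omega>0) * n"
        using eb k0 n0 by (intro mult_right_mono mult_left_mono) auto
      have s2: "k0 * (10 * \<theta> * n + \<omega>0) * n = (10 * \<theta> * k0) * n\<^sup>2 + (k0 * \<omega>0) * n"
        by (simp add: algebra_simps power2_eq_square)
      have s3: "(10 * \<theta> * k0) * n\<^sup>2 \<le> (\<alpha>0 * c1 / 4) * n\<^sup>2"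
        using th2 by (intro mult_right_mono) auto
      have s4: "(k0 * \<omega>0) * n \<le> (\<alpha>0 * c1) / 4 * n\<^sup>2 + (k0 * \<omega>0)\<^sup>2 / (\<alpha>0 * c1)"
        by (rule amgm) (use a0 c1 in simp)
      have s5: "\<mu> * (norm (w r))\<^sup>2 \<le> \<mu> * \<omega>0\<^sup>2"
        using wb[OF r0] mu0 by (intro mult_left_mono power_mono) auto
      have s6: "c1 * n\<^sup>2 \<le> V r" using c1b by (simp add: V_def n_def nz_def)
      have s7: "(\<alpha>0 * c1 / 4) * n\<^sup>2 + (\<alpha>0 * c1) / 4 * n\<^sup>2 \<le> \<alpha>0 / 2 * V r"
      proof -
        have "(\<alpha>0 * c1 / 4) * n\<^sup>2 + (\<alpha>0 * c1) / 4 * n\<^sup>2 = \<alpha>0 / 2 * (c1 * n\<^sup>2)" by (simp add: algebra_simps)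
        also have "\<dots> \<le> \<alpha>0 / 2 * V r" using s6 a0 by (intro mult_left_mono) auto
        finally show ?thesis .
      qed
      have s8: "(k0 * \<omega>0)\<^sup>2 / (\<alpha>0 * c1) = k0\<^sup>2 * \<omega>0\<^sup>2 / (\<alpha>0 * c1)" by (simp add: power_mult_distrib)
      show ?thesis using L s1 s2 s3 s4 s5 s7 s8 unfolding c0_def by linarith
    qed
    have integ: "V t' - V s \<le> integral {s..t'} (\<lambda>r. - (\<alpha>0 / 2) * V r + c0)" if st: "0 \<le> s" "s \<le> t'" for s t'
    proof -
      have ne: "{0..t'} \<noteq> {}" using st by simp
      obtain r1 where r1: "r1 \<in> {0..t'}" "\<And>r. r \<in> {0..t'} \<Longrightarrow> nz r \<le> nz r1"
        using continuous_attains_sup[OF compact_Icc ne cnz] by blast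
      define Bt where "Bt = nz r1"
      define M' where "M' = 3 * MM * (6 * Bt + 2 * \<omega>0)"
      define dz where "dz r = stack (F r) (F r - G r)" for r
      have int: "(dz has_integral (z b - z a)) {a..b}" if "s \<le> a" "a \<le> b" "b \<le> t'" for a b
      proof -
        have a0': "0 \<le> a" using that st by simp
        have "((\<lambda>r. stack (F r) (F r - G r)) has_integral stack (x b - x a) ((x b - x a) - (xh b - xh a))) {a..b}"
          by (intro int_stack has_integral_diff intF' intG' a0' that(2))
        moreover have "stack (x b - x a) ((x b - x a) - (xh b - xh a)) = z b - z a"
          unfolding z_def stack_diff[symmetric] by (simp add: algebra_simps)
        ultimately show ?thesis by (simp add: dz_def[abs_def])
      qed
      have bnd: "norm (dz r) \<le> M'" if r: "r \<in> {s..t'}" for r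
      proof -
        have r0: "r \<ge> 0" and rin: "r \<in> {0..t'}" using r st by auto
        have "norm (dz r) \<le> norm (F r) + norm (F r - G r)" unfolding dz_def by (rule norm_stack_le)
        also have "norm (F r - G r) \<le> norm (F r) + norm (G r)" by (rule norm_triangle_ineq4)
        finally have d1: "norm (dz r) \<le> 2 * norm (F r) + norm (G r)" by simp
        have fF: "norm (F r) \<le> MM * (norm (x r) + norm (xh r) + norm (xs r) + \<omega>0)"
          unfolding F_def by (rule Fb[OF wb[OF r0]])
        have fG: "norm (G r) \<le> MM * (norm (x r) + norm (xh r) + norm (xs r) + \<omega>0)"
          unfolding G_def by (rule Gb[OF wb[OF r0]])
        have n1: "norm (x r) \<le> nz r" unfolding nz_def z_def by (rule norm_stack_ge1)
        have n2: "norm (xh r) \<le> 2 * nz r" unfolding nz_def z_def by (rule norm_xh_le)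
        have n3: "norm (xs r) \<le> norm (xh r) + norm (xs r - xh r)"
          by (metis add.commute diff_add_cancel norm_triangle_ineq)
        have nzn: "nz r \<ge> 0" by (simp add: nz_def)
        have n4: "\<theta> * nz r \<le> nz r / 60" using mult_right_mono[OF th1 nzn] by simp
        have n5: "nz r \<le> Bt" using r1(2)[OF rin] by (simp add: Bt_def)
        have sum: "norm (x r) + norm (xh r) + norm (xs r) + \<omega>0 \<le> 6 * Bt + 2 * \<omega>0"
          using n1 n2 n3 n4 n5 nzn ebound[OF r0] mult.assoc[of 10 \<theta> "nz r"] by linarith
        have "2 * norm (F r) + norm (G r) \<le> 3 * (MM * (norm (x r) + norm (xh r) + norm (xs r) + \<omega>0))"
          using fF fG by linarith
        also have "\<dots> \<le> 3 * (MM * (6 * Bt + 2 * \<omega>0))" using sum MM1 by (intro mult_left_mono) auto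
        finally show ?thesis using d1 by (simp add: M'_def algebra_simps)
      qed
      have hc: "continuous_on {s..t'} (\<lambda>r. - (\<alpha>0 / 2) * V r + c0)"
        by (intro continuous_intros continuous_on_subset[OF cV[of t']]) (use st in auto)
      have "z t' \<bullet> (P *v z t') - z s \<bullet> (P *v z s) \<le> integral {s..t'} (\<lambda>r. - (\<alpha>0 / 2) * V r + c0)"
      proof (rule quad_integral_ineq[OF st(2) int bnd _ KPb _ hc])
        show "0 \<le> KP" using KP1 by simp
        fix r assume "r \<in> {s..t'}"
        then have "r \<ge> 0" using st by simp
        then show "dz r \<bullet> (P *v z r) + z r \<bullet> (P *v dz r) \<le> - (\<alpha>0 / 2) * V r + c0"
          using LETb unfolding dz_def by blast
      qed auto
      then show ?thesis by (simp add: V_def)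
    qed
    have Vt: "V t \<le> exp (- (\<alpha>0 / 2) * t) * V 0 + c0 / (\<alpha>0 / 2)"
      by (rule comparison[where a="\<alpha>0 / 2"]) (use a0 c00 cV integ t0 in auto)
    have sup0: "sup_norm w \<ge> 0"
    proof -
      have "bdd_above ((\<lambda>r. norm (w r)) ` {0..})" using wb by (intro bdd_aboveI[of _ \<omega>0]) auto
      then have "norm (w 0) \<le> sup_norm w" unfolding sup_norm_def by (intro cSUP_upper) auto
      then show ?thesis by (meson norm_ge_zero order_trans)
    qed
    define X where "X = (KP / c1) * exp (- (\<alpha>0 / 2) * t) * (nz 0)\<^sup>2"
    define Y where "Y = 2 * c0 / (\<alpha>0 * c1)"
    have X0: "X \<ge> 0" using KP1 c1 by (simp add: X_def)
    have Y0: "Y \<ge> 0" using c00 a0 c1 by (simp add: Y_def)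
    have V0: "V 0 \<le> KP * (nz 0)\<^sup>2"
      using quad_upper[OF KPb, of "z 0" "z 0"] by (simp add: V_def nz_def power2_eq_square)
    have "c1 * (nz t)\<^sup>2 \<le> V t" using c1b by (simp add: V_def nz_def)
    also have "\<dots> \<le> exp (- (\<alpha>0 / 2) * t) * (KP * (nz 0)\<^sup>2) + c0 / (\<alpha>0 / 2)"
      using Vt mult_left_mono[OF V0 exp_ge_zero[of "- (\<alpha>0 / 2) * t"]] by linarith
    finally have "c1 * (nz t)\<^sup>2 \<le> exp (- (\<alpha>0 / 2) * t) * (KP * (nz 0)\<^sup>2) + c0 / (\<alpha>0 / 2)" .
    then have "(nz t)\<^sup>2 \<le> X + Y" using c1 a0 by (simp add: X_def Y_def field_simps)
    then have "nz t \<le> sqrt (X + Y)" by (simp add: real_le_rsqrt)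
    also have "\<dots> \<le> sqrt X + sqrt Y" by (rule sqrt_add_le_add_sqrt[OF X0 Y0])
    also have "sqrt X = Kb * nz 0 * exp (- (\<alpha>0 / 4 * t))"
    proof -
      have "sqrt X = sqrt (KP / c1) * sqrt (exp (- (\<alpha>0 / 2) * t)) * sqrt ((nz 0)\<^sup>2)"
        unfolding X_def real_sqrt_mult by simp
      also have "sqrt (exp (- (\<alpha>0 / 2) * t)) = exp (- (\<alpha>0 / 4 * t))"
        by (simp add: sqrt_exp_half)
      also have "sqrt ((nz 0)\<^sup>2) = nz 0" by (simp add: nz_def)
      finally show ?thesis by (simp add: Kb_def)
    qed
    also have "sqrt Y = dd" by (simp add: Y_def dd_def)
    finally show ?thesis using sup0 by (simp add: nz_def z_def)
  qed
  show ?thesis unfolding ISpS_et_def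
    apply (rule exI[of _ "\<lambda>s t. Kb * s * exp (- (\<alpha>0 / 4 * t))"])
    apply (rule exI[of _ "\<lambda>s. s"])
    apply (rule exI[of _ dd])
    using KL classK_id dd0 bound by blast
qed

end




lemma le_N: "(K::real) \<le> N \<Longrightarrow> (\<And>v. norm (M *v v) \<le> K * norm v) \<Longrightarrow> norm (M *v v) \<le> N * norm v"
  by (meson mult_right_mono norm_ge_zero order_trans)

theorem theorem3:
  fixes A :: "real^'nx^'nx" and B :: "real^'nu^'nx" and C :: "real^'nx^'ny"
    and D :: "real^'nu^'ny" and E :: "real^'np^'nx" and Ew :: "real^'nw^'nx"
    and Fw :: "real^'nw^'ny" and Cq :: "real^'nx^'nq" and p :: "real^'nq \<Rightarrow> real^'np"
    and K1 :: "real^'nx^'nu" and K2 :: "real^'np^'nu"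
    and L1 :: "real^'ny^'nq" and L2 :: "real^'ny^'nx"
    and P :: "real^('nx + 'nx)^('nx + 'nx)"
    and \<omega>0 \<alpha>0 \<mu> :: real
  assumes p_lip: "\<exists>L. L-lipschitz_on UNIV p"
    and p0: "p 0 = 0"
    and \<omega>0_pos: "\<omega>0 > 0"
    and \<alpha>0_pos: "\<alpha>0 > 0"
    and \<mu>_pos: "\<mu> > 0"
    and P_sym: "transpose P = P"
    and P_pos: "\<forall>z. z \<noteq> 0 \<longrightarrow> z \<bullet> (P *v z) > 0"
    and lyap: "cl_lyap A B C D E Ew Fw Cq p K1 K2 L1 L2 P \<alpha>0 \<mu> \<omega>0"
  shows "\<exists>\<tau> \<sigma> \<epsilon>. \<tau> > 0 \<and> \<sigma> > 0 \<and> \<epsilon> > 0 \<and>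
           ISpS_et A B C D E Ew Fw Cq p K1 K2 L1 L2 \<tau> \<sigma> \<epsilon> \<omega>0"
proof -
  obtain Lp where Lp: "Lp-lipschitz_on UNIV p" using p_lip by blast
  have pL: "norm (p a - p b) \<le> Lp * norm (a - b)" for a b
    using lipschitz_onD[OF Lp, of a b] by (simp add: dist_norm)
  obtain kA where kA1: "kA \<ge> 1" and kA: "\<And>v. norm (A *v v) \<le> kA * norm v" using mat_bound[of A] by blast
  obtain kB where kB1: "kB \<ge> 1" and kB: "\<And>v. norm (B *v v) \<le> kB * norm v" using mat_bound[of B] by blast
  obtain kC where kC1: "kC \<ge> 1" and kC: "\<And>v. norm (C *v v) \<le> kC * norm v" using mat_bound[of C] by blast
  obtain kE where kE1: "kE \<ge> 1" and kE: "\<And>v. norm (E *v v) \<le> kE * norm v" using mat_bound[of E] by blast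
  obtain kEw where kEw1: "kEw \<ge> 1" and kEw: "\<And>v. norm (Ew *v v) \<le> kEw * norm v" using mat_bound[of Ew] by blast
  obtain kFw where kFw1: "kFw \<ge> 1" and kFw: "\<And>v. norm (Fw *v v) \<le> kFw * norm v" using mat_bound[of Fw] by blast
  obtain kCq where kCq1: "kCq \<ge> 1" and kCq: "\<And>v. norm (Cq *v v) \<le> kCq * norm v" using mat_bound[of Cq] by blast
  obtain kK1 where kK11: "kK1 \<ge> 1" and kK1: "\<And>v. norm (K1 *v v) \<le> kK1 * norm v" using mat_bound[of K1] by blast
  obtain kK2 where kK21: "kK2 \<ge> 1" and kK2: "\<And>v. norm (K2 *v v) \<le> kK2 * norm v" using mat_bound[of K2] by blast
  obtain kL1 where kL11: "kL1 \<ge> 1" and kL1: "\<And>v. norm (L1 *v v) \<le> kL1 * norm v" using mat_bound[of L1] by blast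
  obtain kL2 where kL21: "kL2 \<ge> 1" and kL2: "\<And>v. norm (L2 *v v) \<le> kL2 * norm v" using mat_bound[of L2] by blast
  have Lp0: "Lp \<ge> 0" using Lp by (rule lipschitz_on_nonneg)
  define N where "N = 1 + Lp + kA + kB + kC + kE + kEw + kFw + kCq + kK1 + kK2 + kL1 + kL2"
  have Nge: "kA \<le> N" "kB \<le> N" "kC \<le> N" "kE \<le> N" "kEw \<le> N" "kFw \<le> N" "kCq \<le> N" "kK1 \<le> N" "kK2 \<le> N" "kL1 \<le> N" "kL2 \<le> N" "Lp \<le> N" "1 \<le> N"
    unfolding N_def using Lp0 kA1 kB1 kC1 kE1 kEw1 kFw1 kCq1 kK11 kK21 kL11 kL21 by linarith+
  interpret bnds A B C D E Ew Fw Cq p K1 K2 L1 L2 N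
  proof
    show "1 \<le> N" using Nge by simp
    show "norm (A *v v) \<le> N * norm v" for v by (rule le_N[OF _ kA]) (use Nge in simp)
    show "norm (B *v v) \<le> N * norm v" for v by (rule le_N[OF _ kB]) (use Nge in simp)
    show "norm (C *v v) \<le> N * norm v" for v by (rule le_N[OF _ kC]) (use Nge in simp)
    show "norm (E *v v) \<le> N * norm v" for v by (rule le_N[OF _ kE]) (use Nge in simp)
    show "norm (Ew *v v) \<le> N * norm v" for v by (rule le_N[OF _ kEw]) (use Nge in simp)
    show "norm (Fw *v v) \<le> N * norm v" for v by (rule le_N[OF _ kFw]) (use Nge in simp)
    show "norm (Cq *v v) \<le> N * norm v" for v by (rule le_N[OF _ kCq]) (use Nge in simp)
    show "norm (K1 *v v) \<le> N * norm v" for v by (rule le_N[OF _ kK1]) (use Nge in simp)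
    show "norm (K2 *v v) \<le> N * norm v" for v by (rule le_N[OF _ kK2]) (use Nge in simp)
    show "norm (L1 *v v) \<le> N * norm v" for v by (rule le_N[OF _ kL1]) (use Nge in simp)
    show "norm (L2 *v v) \<le> N * norm v" for v by (rule le_N[OF _ kL2]) (use Nge in simp)
    show "norm (p a - p b) \<le> N * norm (a - b)" for a b
      using pL[of a b] mult_right_mono[of Lp N "norm (a - b)"] Nge by simp
    show "p 0 = 0" by (rule p0)
  qed
  obtain KP where KP1: "KP \<ge> 1" and KPb: "\<And>v. norm (P *v v) \<le> KP * norm v" using mat_bound[of P] by blast
  obtain c1 where c1: "c1 > 0" and c1b: "\<And>z. c1 * (norm z)\<^sup>2 \<le> z \<bullet> (P *v z)" using quad_lower[OF P_pos] by blast
  define k0 where "k0 = 2 * KP * (2 * (N*N*N*N))"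
  define \<theta> where "\<theta> = min (1/60) (\<alpha>0 * c1 / (40 * k0))"
  define \<tau> where "\<tau> = \<theta> / MM"
  have k0: "k0 > 0" using k0_def KP1 N_pows[OF N1] N1 by (simp add: mult_pos_pos)
  have th0: "\<theta> > 0" using \<theta>_def \<alpha>0_pos c1 k0 by simp
  have tau0: "\<tau> > 0" using th0 MM_pos \<tau>_def by simp
  have "ISpS_et A B C D E Ew Fw Cq p K1 K2 L1 L2 \<tau> \<theta> \<omega>0 \<omega>0"
    by (rule main[OF lyap KPb KP1 c1 c1b \<omega>0_pos \<alpha>0_pos \<mu>_pos k0_def \<theta>_def \<tau>_def])
  then show ?thesis using tau0 th0 \<omega>0_pos by blast
qed


end
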